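(* Let $L$ be an interval locale, $F\in\mathbf{Mon}(L_{+})$, and $A,B\subseteq F$ subsheaves. Let $A\cup B$ denote the sheaf $L(A\cup B)$ associated to the sectionwise presheaf union. Then the square with $A\cap B\to A$, $A\cap B\to B$, $A\to A\cup B$, $B\to A\cup B$ is a pushout in $\mathbf{Mon}(L_{+})$, $(A\cup B)(i)=A(i)\cup B(i)$, and for every $y\in A(i)\cup B(i)$, $\psi_{A\cup B}(y)=\max\{\psi_A(y),\psi_B(y)\}$ (with $\psi_A(y)$ omitted if $y\notin A(i)$, and similarly for $B$).
   Context: A locale $L$ is a complete lattice in which finite meets distribute over arbitrary joins, with Grothendieck topology: $\{b_j\le a\}$ covers $a$ iff $\bigvee_j b_j=a$. $L$ is an interval if it is totally ordered and densely ordered. $i$ is the bottom element of $L$; $L_{+}=L\sqcup\{0\}$ with a new bottom $0<i$. $\mathbf{Mon}(L_{+})$ is the category of sheaves $F$ on $L_{+}$ with $F(b)\to F(a)$ injective for all $a\le b$ in $L$; regard $F(c)\subseteq F(i)$, and $\psi_F(x)=\sup\{b\in L: x\in F(b)\}$ for $x\in F(i)$. For a presheaf $F$ on $L_{+}$, $LF(a)=\varprojlim_{0<b<a}F(b)$ for $a\in L$, $a\neq i$, $LF(i)=F(i)$, $LF(0)=\ast$. *)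

theory Defs
  imports Main
begin

text \<open>
  Interval locale L: a type of class complete_linorder (complete lattice, totally
  ordered; such lattices automatically satisfy the frame distributive law) which
  is densely ordered (dense_order).  The bottom element i of L is bot.
  L_+ = L plus a new bottom 0 is modelled as the type 'l option, with None = 0.
\<close>

fun le_plus :: "'l::order option \<Rightarrow> 'l option \<Rightarrow> bool" where
  "le_plus None v = True"
| "le_plus (Some a) None = False"
| "le_plus (Some a) (Some b) = (a \<le> b)"

fun meet_plus :: "'l::linorder option \<Rightarrow> 'l option \<Rightarrow> 'l option" where
  "meet_plus None v = None"
| "meet_plus (Some a) None = None"
| "meet_plus (Some a) (Some b) = Some (min a b)"

definition covers :: "'l::order option set \<Rightarrow> 'l option \<Rightarrow> bool" where
  "covers S u \<longleftrightarrow> (\<forall>b\<in>S. le_plus b u) \<and> (\<forall>v. (\<forall>b\<in>S. le_plus b v) \<longrightarrow> le_plus u v)"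

definition is_sheaf_plus ::
  "('l::linorder option \<Rightarrow> 'y set) \<Rightarrow> ('l option \<Rightarrow> 'l option \<Rightarrow> 'y \<Rightarrow> 'y) \<Rightarrow> bool" where
  "is_sheaf_plus P res \<longleftrightarrow>
     (\<forall>u S s. covers S u \<longrightarrow> (\<forall>b\<in>S. s b \<in> P b) \<longrightarrow>
        (\<forall>b\<in>S. \<forall>b'\<in>S. res b (meet_plus b b') (s b) = res b' (meet_plus b b') (s b')) \<longrightarrow>
        (\<exists>!x. x \<in> P u \<and> (\<forall>b\<in>S. res u b x = s b)))"

definition nat_trans ::
  "('l::order option \<Rightarrow> 'y set) \<Rightarrow> ('l option \<Rightarrow> 'l option \<Rightarrow> 'y \<Rightarrow> 'y) \<Rightarrow>
   ('l option \<Rightarrow> 'w set) \<Rightarrow> ('l option \<Rightarrow> 'l option \<Rightarrow> 'w \<Rightarrow> 'w) \<Rightarrow>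
   ('l option \<Rightarrow> 'y \<Rightarrow> 'w) \<Rightarrow> bool" where
  "nat_trans P resP Q resQ \<eta> \<longleftrightarrow>
     (\<forall>u x. x \<in> P u \<longrightarrow> \<eta> u x \<in> Q u) \<and>
     (\<forall>u v x. le_plus v u \<longrightarrow> x \<in> P u \<longrightarrow> \<eta> v (resP u v x) = resQ u v (\<eta> u x))"

text \<open>Objects of Mon(L_+), following the paper's convention of regarding F(c) as a
  subset of F(i): an object is given by F :: 'l => 'x set (F c for c in L), with
  F b \<subseteq> F a for a \<le> b, the restriction maps being the inclusions (hence
  injective).  The sections over u in L_+ are represented as 'x option:
  Some x for x in F a over u = Some a, and the single section None over 0.\<close>
definition monP :: "('l \<Rightarrow> 'x set) \<Rightarrow> 'l option \<Rightarrow> 'x option set" where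
  "monP F u = (case u of None \<Rightarrow> {None} | Some a \<Rightarrow> Some ` F a)"

definition monRes :: "'l option \<Rightarrow> 'l option \<Rightarrow> 'x option \<Rightarrow> 'x option" where
  "monRes u v s = (if v = None then None else s)"

definition is_mon :: "('l::linorder \<Rightarrow> 'x set) \<Rightarrow> bool" where
  "is_mon F \<longleftrightarrow> (\<forall>a b. a \<le> b \<longrightarrow> F b \<subseteq> F a) \<and> is_sheaf_plus (monP F) monRes"

definition mon_hom :: "('l::linorder \<Rightarrow> 'x set) \<Rightarrow> ('l \<Rightarrow> 'z set) \<Rightarrow>
   ('l option \<Rightarrow> 'x option \<Rightarrow> 'z option) \<Rightarrow> bool" where
  "mon_hom F G \<eta> \<longleftrightarrow> nat_trans (monP F) monRes (monP G) monRes \<eta>"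

definition mon_hom_eq :: "('l \<Rightarrow> 'x set) \<Rightarrow>
   ('l option \<Rightarrow> 'x option \<Rightarrow> 'z option) \<Rightarrow> ('l option \<Rightarrow> 'x option \<Rightarrow> 'z option) \<Rightarrow> bool" where
  "mon_hom_eq F \<eta> \<theta> \<longleftrightarrow> (\<forall>u. \<forall>x\<in>monP F u. \<eta> u x = \<theta> u x)"

definition subsheaf :: "('l::linorder \<Rightarrow> 'x set) \<Rightarrow> ('l \<Rightarrow> 'x set) \<Rightarrow> bool" where
  "subsheaf A F \<longleftrightarrow> is_mon A \<and> (\<forall>a. A a \<subseteq> F a)"

definition sec_inter :: "('l \<Rightarrow> 'x set) \<Rightarrow> ('l \<Rightarrow> 'x set) \<Rightarrow> 'l \<Rightarrow> 'x set" where
  "sec_inter A B a = A a \<inter> B a"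

text \<open>The operator L applied to a presheaf P with injective (inclusion) restriction
  maps: LP(i) = P(i), and for a \<noteq> i, LP(a) = lim_{0<b<a} P(b), where the inverse limit
  of the chain of inclusions is identified (as in the paper) with the subset
  of P(i) of elements lying in every P(b), i \<le> b < a.\<close>
definition Lop :: "('l::{complete_linorder} \<Rightarrow> 'x set) \<Rightarrow> 'l \<Rightarrow> 'x set" where
  "Lop P a = (if a = bot then P bot else {x. \<forall>b. b < a \<longrightarrow> x \<in> P b})"

definition sheaf_union :: "('l::complete_linorder \<Rightarrow> 'x set) \<Rightarrow> ('l \<Rightarrow> 'x set) \<Rightarrow> 'l \<Rightarrow> 'x set" where
  "sheaf_union A B = Lop (\<lambda>b. A b \<union> B b)"

definition psi :: "('l::complete_lattice \<Rightarrow> 'x set) \<Rightarrow> 'x \<Rightarrow> 'l" where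
  "psi F x = Sup {b. x \<in> F b}"

definition incl :: "'l option \<Rightarrow> 'x option \<Rightarrow> 'x option" where
  "incl u x = x"

end

theory Submission
  imports Defs
begin

lemma is_monD_anti: "is_mon F \<Longrightarrow> a \<le> b \<Longrightarrow> F b \<subseteq> F a"
  by (simp add: is_mon_def)

lemma is_monD_lc:
  fixes F :: "'l::complete_linorder \<Rightarrow> 'x set"
  assumes m: "is_mon F" and ne: "T \<noteq> {}" and y: "\<forall>c\<in>T. y \<in> F c"
  shows "y \<in> F (Sup T)"
proof -
  have sh: "is_sheaf_plus (monP F) monRes" using m by (simp add: is_mon_def)
  have cov: "covers (Some ` T) (Some (Sup T))"
    unfolding covers_def
  proof (intro conjI allI impI ballI)
    fix b assume "b \<in> Some ` T" then show "le_plus b (Some (Sup T))" by (auto intro: Sup_upper)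
  next
    fix v assume h: "\<forall>b\<in>Some ` T. le_plus b v"
    obtain c where "c\<in>T" using ne by auto
    then have "le_plus (Some c) v" using h by blast
    then have "v \<noteq> None" by (cases v) auto
    then obtain w where v: "v = Some w" by auto
    have "\<forall>c\<in>T. c \<le> w" using h v by auto
    then show "le_plus (Some (Sup T)) v" using v by (simp add: Sup_least)
  qed
  have all: "\<forall>u S s. covers S u \<longrightarrow> (\<forall>b\<in>S. s b \<in> monP F b) \<longrightarrow>
        (\<forall>b\<in>S. \<forall>b'\<in>S. monRes b (meet_plus b b') (s b) = monRes b' (meet_plus b b') (s b')) \<longrightarrow>
        (\<exists>!x. x \<in> monP F u \<and> (\<forall>b\<in>S. monRes u b x = s b))"
    using sh unfolding is_sheaf_plus_def by blast
  have "\<exists>!x. x \<in> monP F (Some (Sup T)) \<and> (\<forall>b\<in>Some ` T. monRes (Some (Sup T)) b x = Some y)"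
    apply (rule all[rule_format, of "Some ` T" "Some (Sup T)" "\<lambda>_. Some y", OF cov])
    using y by (auto simp: monP_def monRes_def)
  then obtain x where x: "x \<in> monP F (Some (Sup T))" and xr: "\<forall>b\<in>Some ` T. monRes (Some (Sup T)) b x = Some y"
    by blast
  obtain c where "c\<in>T" using ne by auto
  then have "x = Some y" using xr by (auto simp: monRes_def)
  then show ?thesis using x by (auto simp: monP_def)
qed

lemma is_monI:
  fixes F :: "'l::complete_linorder \<Rightarrow> 'x set"
  assumes anti: "\<And>a b. a \<le> b \<Longrightarrow> F b \<subseteq> F a"
    and lc: "\<And>T y. T \<noteq> {} \<Longrightarrow> \<forall>c\<in>T. y \<in> F c \<Longrightarrow> y \<in> F (Sup T)"
  shows "is_mon F"
  unfolding is_mon_def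
proof (intro conjI allI impI)
  fix a b :: 'l assume "a \<le> b" then show "F b \<subseteq> F a" by (rule anti)
next
  show "is_sheaf_plus (monP F) monRes"
    unfolding is_sheaf_plus_def
  proof (intro allI impI)
    fix u and S :: "'l option set" and s
    assume cov: "covers S u" and sP: "\<forall>b\<in>S. s b \<in> monP F b"
      and comp: "\<forall>b\<in>S. \<forall>b'\<in>S. monRes b (meet_plus b b') (s b) = monRes b' (meet_plus b b') (s b')"
    show "\<exists>!x. x \<in> monP F u \<and> (\<forall>b\<in>S. monRes u b x = s b)"
    proof (cases u)
      case None
      have "\<forall>b\<in>S. b = None"
      proof
        fix b assume "b \<in> S"
        then have "le_plus b None" using cov None unfolding covers_def by blast
        then show "b = None" by (cases b) auto
      qed
      then have "\<forall>b\<in>S. s b = None" using sP by (auto simp: monP_def split: option.splits)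
      then show ?thesis using None \<open>\<forall>b\<in>S. b = None\<close> by (auto simp: monP_def monRes_def)
    next
      case (Some a)
      define T where "T = {c. Some c \<in> S}"
      have Tne: "T \<noteq> {}"
      proof
        assume "T = {}"
        have "\<forall>b\<in>S. le_plus b None"
        proof
          fix b assume "b \<in> S"
          then have "b = None" using \<open>T = {}\<close> unfolding T_def by (cases b) auto
          then show "le_plus b None" by simp
        qed
        then show False using cov Some unfolding covers_def by auto
      qed
      have up: "\<forall>c\<in>T. c \<le> a" using cov Some unfolding covers_def T_def by auto
      have "\<forall>b\<in>S. le_plus b (Some (Sup T))"
      proof
        fix b assume "b \<in> S"
        then show "le_plus b (Some (Sup T))" by (cases b) (auto simp: T_def intro: Sup_upper)
      qed
      then have "le_plus u (Some (Sup T))" using cov unfolding covers_def by blast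
      then have supT: "Sup T = a" using Some up by (simp add: Sup_least antisym)
      obtain c0 where c0: "c0 \<in> T" using Tne by auto
      obtain y where y: "s (Some c0) = Some y" "y \<in> F c0" proof -
        have "s (Some c0) \<in> Some ` F c0" using sP c0 unfolding T_def by (force simp: monP_def)
        then show ?thesis using that by blast
      qed
      have sc: "\<forall>c\<in>T. s (Some c) = Some y"
      proof
        fix c assume c: "c \<in> T"
        have "monRes (Some c) (meet_plus (Some c) (Some c0)) (s (Some c)) = monRes (Some c0) (meet_plus (Some c) (Some c0)) (s (Some c0))"
          using comp c c0 unfolding T_def by blast
        then show "s (Some c) = Some y" using y by (simp add: monRes_def)
      qed
      have "\<forall>c\<in>T. y \<in> F c" using sc sP unfolding T_def by (force simp: monP_def)
      then have yF: "y \<in> F a" using lc[OF Tne] supT by blast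
      have sb: "\<forall>b\<in>S. monRes u b (Some y) = s b"
      proof
        fix b assume b: "b \<in> S"
        show "monRes u b (Some y) = s b"
        proof (cases b)
          case None then show ?thesis using sP b by (auto simp: monP_def monRes_def)
        next
          case (Some c) then show ?thesis using sc b unfolding T_def by (auto simp: monRes_def)
        qed
      qed
      show ?thesis
      proof (rule ex1I[of _ "Some y"])
        show "Some y \<in> monP F u \<and> (\<forall>b\<in>S. monRes u b (Some y) = s b)"
          using yF sb Some by (simp add: monP_def)
      next
        fix x assume "x \<in> monP F u \<and> (\<forall>b\<in>S. monRes u b x = s b)"
        then have "monRes u (Some c0) x = s (Some c0)" using c0 unfolding T_def by blast
        then show "x = Some y" using y by (simp add: monRes_def)
      qed
    qed
  qed
qed


lemma dense_Sup:
  fixes s a :: "'l::{complete_linorder, dense_order}"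
  assumes "s < a"
  shows "Sup {c. s < c \<and> c < a} = a"
proof (rule antisym)
  show "Sup {c. s < c \<and> c < a} \<le> a" by (rule Sup_least) (simp add: less_imp_le)
next
  show "a \<le> Sup {c. s < c \<and> c < a}"
  proof (rule ccontr)
    assume "\<not> ?thesis"
    then have t: "Sup {c. s < c \<and> c < a} < a" by simp
    obtain e where e: "s < e" "e < a" using dense[OF assms] by blast
    have "e \<le> Sup {c. s < c \<and> c < a}" using e by (auto intro: Sup_upper)
    obtain c where c: "Sup {c. s < c \<and> c < a} < c" "c < a" using dense[OF t] by blast
    have "s < c" using e(1) c(1) \<open>e \<le> _\<close> by (meson le_less_trans less_trans)
    then have "c \<le> Sup {c. s < c \<and> c < a}" using c by (auto intro: Sup_upper)
    then show False using c by auto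
  qed
qed

lemma union_eq:
  fixes A B :: "'l::{complete_linorder, dense_order} \<Rightarrow> 'x set"
  assumes mA: "is_mon A" and mB: "is_mon B"
  shows "sheaf_union A B a = A a \<union> B a"
proof (cases "a = bot")
  case True then show ?thesis by (simp add: sheaf_union_def Lop_def)
next
  case False
  then have U: "sheaf_union A B a = {x. \<forall>b. b < a \<longrightarrow> x \<in> A b \<union> B b}"
    by (simp add: sheaf_union_def Lop_def)
  show ?thesis
  proof
    show "A a \<union> B a \<subseteq> sheaf_union A B a" unfolding U
    proof
      fix x assume x: "x \<in> A a \<union> B a"
      have "\<forall>b. b < a \<longrightarrow> x \<in> A b \<union> B b"
      proof (intro allI impI)
        fix b assume "b < a"
        then have "b \<le> a" by simp
        then show "x \<in> A b \<union> B b" using x is_monD_anti[OF mA] is_monD_anti[OF mB] by blast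
      qed
      then show "x \<in> {x. \<forall>b. b < a \<longrightarrow> x \<in> A b \<union> B b}" by simp
    qed
  next
    show "sheaf_union A B a \<subseteq> A a \<union> B a"
    proof
      fix y assume "y \<in> sheaf_union A B a"
      then have yb: "\<forall>b. b < a \<longrightarrow> y \<in> A b \<union> B b" using U by simp
      define TA where "TA = {b. b < a \<and> y \<in> A b}"
      define s where "s = Sup TA"
      have "s \<le> a" unfolding s_def TA_def by (rule Sup_least) (simp add: less_imp_le)
      show "y \<in> A a \<union> B a"
      proof (cases "s = a")
        case True
        have "TA \<noteq> {}"
        proof
          assume "TA = {}"
          then have "s = bot" unfolding s_def by simp
          then show False using True \<open>a \<noteq> bot\<close> by simp
        qed
        moreover have "\<forall>c\<in>TA. y \<in> A c" unfolding TA_def by blast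
        ultimately have "y \<in> A (Sup TA)" by (rule is_monD_lc[OF mA])
        then show ?thesis using True s_def by simp
      next
        case False
        then have sa: "s < a" using \<open>s \<le> a\<close> by simp
        define T where "T = {c. s < c \<and> c < a}"
        obtain e where "s < e" "e < a" using dense[OF sa] by blast
        then have "T \<noteq> {}" unfolding T_def by blast
        moreover have "\<forall>c\<in>T. y \<in> B c"
        proof
          fix c assume c: "c \<in> T"
          have "y \<notin> A c"
          proof
            assume "y \<in> A c"
            then have "c \<in> TA" using c unfolding T_def TA_def by simp
            then have "c \<le> s" unfolding s_def by (rule Sup_upper)
            then show False using c unfolding T_def by (blast dest: leD)
          qed
          then show "y \<in> B c" using yb c unfolding T_def by blast
        qed
        ultimately have "y \<in> B (Sup T)" by (rule is_monD_lc[OF mB])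
        then show ?thesis using dense_Sup[OF sa] unfolding T_def by simp
      qed
    qed
  qed
qed

lemma monP_inter:
  "x \<in> monP A u \<Longrightarrow> x \<in> monP B u \<Longrightarrow> x \<in> monP (sec_inter A B) u"
  by (cases u) (auto simp: monP_def sec_inter_def)

lemma monP_union:
  fixes A B :: "'l::{complete_linorder, dense_order} \<Rightarrow> 'x set"
  assumes "is_mon A" "is_mon B"
  shows "monP (sheaf_union A B) u = monP A u \<union> monP B u"
  using union_eq[OF assms] by (cases u) (auto simp: monP_def)

lemma res_mem:
  assumes anti: "\<And>a b. a \<le> b \<Longrightarrow> A b \<subseteq> A a" and le: "le_plus v u" and x: "x \<in> monP A u"
  shows "monRes u v x \<in> monP A v"
proof (cases v)
  case None then show ?thesis by (simp add: monRes_def monP_def)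
next
  case (Some b)
  then obtain a where u: "u = Some a" and ba: "b \<le> a" using le by (cases u) auto
  then show ?thesis using x anti[OF ba] Some by (auto simp: monRes_def monP_def)
qed

lemma hom_incl:
  assumes "\<And>a. A a \<subseteq> C a"
  shows "mon_hom A C incl"
  using assms unfolding mon_hom_def nat_trans_def incl_def
  by (auto simp: monP_def split: option.splits)


theorem mainTheorem11:
  fixes F A B :: "'l::{complete_linorder, dense_order} \<Rightarrow> 'x set"
  assumes "is_mon F"
    and "subsheaf A F" and "subsheaf B F"
  shows "is_mon (sec_inter A B) \<and> is_mon (sheaf_union A B)
    \<and> mon_hom (sec_inter A B) A incl \<and> mon_hom (sec_inter A B) B incl
    \<and> mon_hom A (sheaf_union A B) incl \<and> mon_hom B (sheaf_union A B) incl
    \<and> (\<forall>(G :: 'l \<Rightarrow> 'z set) f g. is_mon G \<longrightarrow> mon_hom A G f \<longrightarrow> mon_hom B G g \<longrightarrow>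
          mon_hom_eq (sec_inter A B) f g \<longrightarrow>
          (\<exists>h. mon_hom (sheaf_union A B) G h \<and> mon_hom_eq A h f \<and> mon_hom_eq B h g
               \<and> (\<forall>h'. mon_hom (sheaf_union A B) G h' \<longrightarrow> mon_hom_eq A h' f \<longrightarrow>
                       mon_hom_eq B h' g \<longrightarrow> mon_hom_eq (sheaf_union A B) h' h)))
    \<and> sheaf_union A B bot = A bot \<union> B bot
    \<and> (\<forall>y \<in> A bot \<union> B bot. psi (sheaf_union A B) y =
          (if y \<in> A bot \<and> y \<in> B bot then max (psi A y) (psi B y)
           else if y \<in> A bot then psi A y else psi B y))"
proof -
  have mA: "is_mon A" and mB: "is_mon B" using assms by (auto simp: subsheaf_def)
  note UE = union_eq[OF mA mB]
  note aA = is_monD_anti[OF mA] and aB = is_monD_anti[OF mB]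
  have i1: "is_mon (sec_inter A B)"
  proof (rule is_monI)
    fix a b :: 'l assume "a \<le> b" then show "sec_inter A B b \<subseteq> sec_inter A B a"
      using aA aB unfolding sec_inter_def by blast
  next
    fix T y assume "T \<noteq> {}" "\<forall>c\<in>T. y \<in> sec_inter A B c"
    then show "y \<in> sec_inter A B (Sup T)"
      using is_monD_lc[OF mA] is_monD_lc[OF mB] unfolding sec_inter_def by blast
  qed
  have i2: "is_mon (sheaf_union A B)"
  proof (rule is_monI)
    fix a b :: 'l assume "a \<le> b" then show "sheaf_union A B b \<subseteq> sheaf_union A B a"
      using aA aB unfolding UE by blast
  next
    fix T y assume ne: "T \<noteq> {}" and yT: "\<forall>c\<in>T. y \<in> sheaf_union A B c"
    show "y \<in> sheaf_union A B (Sup T)"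
    proof (cases "Sup T = bot")
      case True
      obtain c where c: "c \<in> T" using ne by auto
      then have "c \<le> Sup T" by (rule Sup_upper)
      then have "c = bot" using True by (simp add: bot_unique)
      have "y \<in> sheaf_union A B c" using yT c by blast
      moreover have "Sup T = c" using True \<open>c = bot\<close> by (rule trans[OF _ sym])
      ultimately show ?thesis by (simp only:)
    next
      case False
      have "\<forall>b. b < Sup T \<longrightarrow> y \<in> A b \<union> B b"
      proof (intro allI impI)
        fix b assume "b < Sup T"
        then obtain c where c: "c \<in> T" "b < c" by (auto simp: less_Sup_iff)
        then have "y \<in> A c \<union> B c" using yT UE by blast
        then show "y \<in> A b \<union> B b" using aA[of b c] aB[of b c] c less_imp_le by blast
      qed
      moreover have "\<And>a. a \<noteq> bot \<Longrightarrow> sheaf_union A B a = {x. \<forall>b. b < a \<longrightarrow> x \<in> A b \<union> B b}"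
        by (simp add: sheaf_union_def Lop_def)
      ultimately show ?thesis using False by blast
    qed
  qed
  have h3: "mon_hom (sec_inter A B) A incl" "mon_hom (sec_inter A B) B incl"
    by (auto intro!: hom_incl simp: sec_inter_def)
  have h5: "mon_hom A (sheaf_union A B) incl" "mon_hom B (sheaf_union A B) incl"
    by (auto intro!: hom_incl simp: UE)
  have po: "\<forall>(G :: 'l \<Rightarrow> 'z set) f g. is_mon G \<longrightarrow> mon_hom A G f \<longrightarrow> mon_hom B G g \<longrightarrow>
          mon_hom_eq (sec_inter A B) f g \<longrightarrow>
          (\<exists>h. mon_hom (sheaf_union A B) G h \<and> mon_hom_eq A h f \<and> mon_hom_eq B h g
               \<and> (\<forall>h'. mon_hom (sheaf_union A B) G h' \<longrightarrow> mon_hom_eq A h' f \<longrightarrow>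
                       mon_hom_eq B h' g \<longrightarrow> mon_hom_eq (sheaf_union A B) h' h))"
  proof (intro allI impI)
    fix G :: "'l \<Rightarrow> 'z set" and f g
    assume hf: "mon_hom A G f" and hg: "mon_hom B G g" and eq: "mon_hom_eq (sec_inter A B) f g"
    define h where "h u x = (if x \<in> monP A u then f u x else g u x)" for u x
    note MU = monP_union[OF mA mB]
    have fG: "\<And>u x. x \<in> monP A u \<Longrightarrow> f u x \<in> monP G u"
      and fN: "\<And>u v x. le_plus v u \<Longrightarrow> x \<in> monP A u \<Longrightarrow> f v (monRes u v x) = monRes u v (f u x)"
      using hf unfolding mon_hom_def nat_trans_def by blast+
    have gG: "\<And>u x. x \<in> monP B u \<Longrightarrow> g u x \<in> monP G u"
      and gN: "\<And>u v x. le_plus v u \<Longrightarrow> x \<in> monP B u \<Longrightarrow> g v (monRes u v x) = monRes u v (g u x)"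
      using hg unfolding mon_hom_def nat_trans_def by blast+
    have fg: "\<And>u x. x \<in> monP A u \<Longrightarrow> x \<in> monP B u \<Longrightarrow> f u x = g u x"
      using eq monP_inter unfolding mon_hom_eq_def by blast
    have resA: "\<And>u v x. le_plus v u \<Longrightarrow> x \<in> monP A u \<Longrightarrow> monRes u v x \<in> monP A v"
      using aA res_mem by blast
    have resB: "\<And>u v x. le_plus v u \<Longrightarrow> x \<in> monP B u \<Longrightarrow> monRes u v x \<in> monP B v"
      using aB res_mem by blast
    have hom: "mon_hom (sheaf_union A B) G h"
      unfolding mon_hom_def nat_trans_def
    proof (intro conjI allI impI)
      fix u x assume "x \<in> monP (sheaf_union A B) u"
      then show "h u x \<in> monP G u" using fG gG unfolding MU h_def by auto
    next
      fix u v x assume le: "le_plus v u" and x: "x \<in> monP (sheaf_union A B) u"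
      show "h v (monRes u v x) = monRes u v (h u x)"
      proof (cases "x \<in> monP A u")
        case True
        then show ?thesis using fN[OF le True] resA[OF le True] unfolding h_def by simp
      next
        case nA: False
        then have xB: "x \<in> monP B u" using x MU by auto
        show ?thesis
        proof (cases "monRes u v x \<in> monP A v")
          case True
          then have "h v (monRes u v x) = g v (monRes u v x)"
            using fg resB[OF le xB] unfolding h_def by simp
          then show ?thesis using gN[OF le xB] nA unfolding h_def by simp
        next
          case False
          then show ?thesis using gN[OF le xB] nA unfolding h_def by simp
        qed
      qed
    qed
    have eA: "mon_hom_eq A h f" unfolding mon_hom_eq_def h_def by simp
    have eB: "mon_hom_eq B h g" unfolding mon_hom_eq_def h_def using fg by simp
    have un: "\<forall>h'. mon_hom (sheaf_union A B) G h' \<longrightarrow> mon_hom_eq A h' f \<longrightarrow>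
                       mon_hom_eq B h' g \<longrightarrow> mon_hom_eq (sheaf_union A B) h' h"
    proof (intro allI impI)
      fix h' assume e1: "mon_hom_eq A h' f" and e2: "mon_hom_eq B h' g"
      show "mon_hom_eq (sheaf_union A B) h' h"
        unfolding mon_hom_eq_def
      proof (intro allI ballI)
        fix u x assume "x \<in> monP (sheaf_union A B) u"
        then have "x \<in> monP A u \<or> x \<in> monP B u" using MU by blast
        then show "h' u x = h u x"
        proof
          assume xa: "x \<in> monP A u"
          then show ?thesis using e1 unfolding mon_hom_eq_def h_def by simp
        next
          assume xb: "x \<in> monP B u"
          show ?thesis
          proof (cases "x \<in> monP A u")
            case True then show ?thesis using e1 unfolding mon_hom_eq_def h_def by simp
          next
            case False then show ?thesis using e2 xb unfolding mon_hom_eq_def h_def by simp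
          qed
        qed
      qed
    qed
    show "\<exists>h. mon_hom (sheaf_union A B) G h \<and> mon_hom_eq A h f \<and> mon_hom_eq B h g
               \<and> (\<forall>h'. mon_hom (sheaf_union A B) G h' \<longrightarrow> mon_hom_eq A h' f \<longrightarrow>
                       mon_hom_eq B h' g \<longrightarrow> mon_hom_eq (sheaf_union A B) h' h)"
      using hom eA eB un by blast
  qed
  have ps: "\<forall>y \<in> A bot \<union> B bot. psi (sheaf_union A B) y =
          (if y \<in> A bot \<and> y \<in> B bot then max (psi A y) (psi B y)
           else if y \<in> A bot then psi A y else psi B y)"
  proof
    fix y
    have "{b. y \<in> sheaf_union A B b} = {b. y \<in> A b} \<union> {b. y \<in> B b}" using UE by auto
    then have P: "psi (sheaf_union A B) y = max (psi A y) (psi B y)"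
      unfolding psi_def by (simp add: Sup_union_distrib sup_max)
    have nA: "y \<notin> A bot \<Longrightarrow> psi A y = bot"
      proof -
      assume "y \<notin> A bot"
      then have "{b. y \<in> A b} = {}" using aA[OF bot_least] by blast
      then show ?thesis unfolding psi_def by simp
    qed
    have nB: "y \<notin> B bot \<Longrightarrow> psi B y = bot"
      proof -
      assume "y \<notin> B bot"
      then have "{b. y \<in> B b} = {}" using aB[OF bot_least] by blast
      then show ?thesis unfolding psi_def by simp
    qed
    show "psi (sheaf_union A B) y =
          (if y \<in> A bot \<and> y \<in> B bot then max (psi A y) (psi B y)
           else if y \<in> A bot then psi A y else psi B y)"
      using P nA nB by (auto simp: max_def bot_unique)
  qed
  show ?thesis using i1 i2 h3 h5 po ps UE by blast
qed

end
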